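(* Let $s=\sigma+i\rho\in\mathbb{C}$ with $\sigma>1$ and let $c\in\mathbb{R}$ with $0<c<1$. Then $$\zeta(s)=\frac{i}{2}\int_{c-i\infty}^{c+i\infty} t^{-s}\cot(\pi t)\,dt=-\frac{1}{2}\int_{-\infty}^{\infty}(c+it)^{-s}\cot\big(\pi(c+it)\big)\,dt .$$
   Context: $\zeta(s)=\sum_{k\ge1}k^{-s}$ for $\sigma>1$ is the Riemann zeta function. Powers $t^{-s}$ with $\operatorname{Re} t>0$ use the principal branch of the logarithm; the first integral is along the vertical line $\operatorname{Re} t=c$ traversed upward. *)

theory Defs
  imports "HOL-Analysis.Analysis"
begin

text \<open>Riemann zeta function for Re s > 1, as the Dirichlet series sum over k >= 1 of k^(-s).
  Complex powers use the principal branch of the logarithm (powr on complex).\<close>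
definition riemann_zeta :: "complex \<Rightarrow> complex" where
  "riemann_zeta s = (\<Sum>k. 1 / (of_nat (Suc k)) powr s)"

text \<open>Integral along the vertical line Re t = c, traversed upward:
  parametrise t = c + i y, dt = i dy.\<close>
definition vertical_line_integral :: "real \<Rightarrow> (complex \<Rightarrow> complex) \<Rightarrow> complex" where
  "vertical_line_integral c f = \<i> * integral UNIV (\<lambda>y::real. f (Complex c y))"

end

theory Submission
  imports Defs "HOL-Complex_Analysis.Complex_Analysis"
begin


lemma norm_cos_sq':
  fixes z :: complex
  shows "norm (cos z)^2 = (exp (2*Im z) + inverse (exp (2*Im z)) + 2 * cos (2 * Re z)) / 4"
proof -
  have e: "exp (2*Im z) = exp (Im z)^2" "inverse (exp (2*Im z)) = inverse (exp (Im z))^2"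
    by (simp_all add: exp_double[symmetric] power_inverse mult.commute)
  have c: "cos (2 * Re z) = 2 * cos (Re z)^2 - 1" by (simp add: cos_double_cos)
  have i: "exp (Im z) * inverse (exp (Im z)) = 1" by simp
  show ?thesis unfolding norm_cos_squared e c
    using i by (simp add: power2_eq_square field_simps)
qed

lemma norm_cot_sq:
  fixes z :: complex
  defines "E \<equiv> exp (2*Im z) + inverse (exp (2*Im z))"
  shows "norm (cot z)^2 = (E + 2 * cos (2 * Re z)) / (E - 2 * cos (2 * Re z))"
proof -
  have "norm (cot z)^2 = norm (cos z)^2 / norm (sin z)^2"
    by (simp add: cot_def norm_divide power_divide)
  also have "\<dots> = ((E + 2 * cos (2 * Re z))/4) / ((E - 2 * cos (2 * Re z))/4)"
    unfolding norm_cos_sq' norm_sin_squared E_def by (simp add: algebra_simps)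
  also have "\<dots> = (4*(E + 2 * cos (2 * Re z))) / (4*(E - 2 * cos (2 * Re z)))"
    by simp
  also have "\<dots> = (E + 2 * cos (2 * Re z)) / (E - 2 * cos (2 * Re z))"
    by (rule mult_divide_mult_cancel_left) simp
  finally show ?thesis .
qed

lemma E_ge2: "exp (x::real) + inverse (exp x) \<ge> 2"
proof -
  have "0 \<le> (exp x - 1)^2 / exp x" by simp
  also have "\<dots> = exp x + inverse (exp x) - 2"
    by (simp add: field_simps power2_eq_square)
  finally show ?thesis by simp
qed

lemma norm_cot_bound_vert:
  fixes z :: complex
  assumes "cos (2 * Re z) \<le> k" "k < 1"
  shows "norm (cot z) \<le> 2 / (1 - k)"
proof -
  define E where "E = exp (2*Im z) + inverse (exp (2*Im z))"
  have E2: "E \<ge> 2" unfolding E_def by (rule E_ge2)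
  have k1: "-1 \<le> k" using assms(1) cos_ge_minus_one[of "2*Re z"] by linarith
  have cl: "cos (2 * Re z) \<ge> -1" by simp
  have den: "E - 2 * cos (2 * Re z) \<ge> 2 - 2*k" using E2 assms by linarith
  have dp: "E - 2 * cos (2 * Re z) > 0" using den assms by linarith
  have "norm (cot z)^2 = (E + 2 * cos (2 * Re z)) / (E - 2 * cos (2 * Re z))"
    unfolding E_def by (rule norm_cot_sq)
  also have "\<dots> \<le> 2 / (1-k)"
  proof -
    have "(E + 2 * cos (2 * Re z)) * (1-k) \<le> 2 * (E - 2 * cos (2 * Re z))"
    proof -
      have "(E + 2 * cos (2 * Re z)) * (1-k) - 2 * (E - 2 * cos (2 * Re z))
            = (1+k)*(2 - E) + (2 * cos (2 * Re z) - 2*k) * (3 - k) - 2*(1-k)^2"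
        by (simp add: algebra_simps power2_eq_square)
      moreover have "(1+k)*(2 - E) \<le> 0" using k1 E2 by (simp add: mult_nonneg_nonpos)
      moreover have "(2 * cos (2 * Re z) - 2*k) * (3 - k) \<le> 0"
        using assms by (simp add: mult_nonpos_nonneg)
      moreover have "(1-k)^2 \<ge> 0" by simp
      ultimately show ?thesis by linarith
    qed
    then show ?thesis using dp assms by (simp add: field_simps)
  qed
  finally have sq: "norm (cot z)^2 \<le> 2 / (1-k)" .
  have B1: "2/(1-k) \<ge> 1" using assms k1 by (simp add: field_simps)
  have "1 * (2/(1-k)) \<le> (2/(1-k)) * (2/(1-k))"
    by (rule mult_right_mono[OF B1]) (use B1 in linarith)
  then have "norm (cot z)^2 \<le> (2/(1-k))^2"
    using sq by (simp add: power2_eq_square)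
  moreover have "0 \<le> 2/(1-k)" using assms by simp
  ultimately show ?thesis by (rule power2_le_imp_le)
qed

lemma norm_cot_bound_horiz:
  fixes z :: complex
  assumes "\<bar>Im z\<bar> \<ge> 1"
  shows "norm (cot z) \<le> 3"
proof -
  define E where "E = exp (2*Im z) + inverse (exp (2*Im z))"
  have "E \<ge> 3"
  proof (cases "Im z \<ge> 0")
    case True
    then have "Im z \<ge> 1" using assms by simp
    then have "exp (2*Im z) \<ge> 1 + 2*Im z" using exp_ge_add_one_self by blast
    then have "exp (2*Im z) \<ge> 3" using \<open>Im z \<ge> 1\<close> by linarith
    moreover have "inverse (exp (2*Im z)) > 0" by simp
    ultimately show ?thesis unfolding E_def by linarith
  next
    case False
    then have "-Im z \<ge> 1" using assms by simp
    then have "exp (-2*Im z) \<ge> 1 + -2*Im z" using exp_ge_add_one_self by (metis mult_minus_left)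
    then have "exp (-2*Im z) \<ge> 3" using \<open>-Im z \<ge> 1\<close> by linarith
    moreover have "inverse (exp (2*Im z)) = exp (-2*Im z)" by (simp add: exp_minus)
    moreover have "exp (2*Im z) > 0" by simp
    ultimately show ?thesis unfolding E_def by linarith
  qed
  have cl: "cos (2 * Re z) \<ge> -1" "cos (2 * Re z) \<le> 1" by simp_all
  have "norm (cot z)^2 = (E + 2 * cos (2 * Re z)) / (E - 2 * cos (2 * Re z))"
    unfolding E_def by (rule norm_cot_sq)
  also have "\<dots> \<le> 5"
  proof -
    have d: "E - 2 * cos (2 * Re z) > 0" using \<open>E \<ge> 3\<close> cl by linarith
    have "E + 2 * cos (2 * Re z) \<le> 5 * (E - 2 * cos (2 * Re z))"
      using \<open>E \<ge> 3\<close> by (simp add: algebra_simps) (use cos_le_one[of "Re z * 2"] \<open>E \<ge> 3\<close> in linarith)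
    then show ?thesis using d by (simp add: divide_le_eq)
  qed
  finally have "norm (cot z)^2 \<le> 3^2" by simp
  then show ?thesis by (rule power2_le_imp_le) simp
qed

lemma norm_powr_bound:
  fixes z s :: complex
  assumes "Re z > 0"
  shows "norm (z powr (-s)) \<le> exp (pi/2 * \<bar>Im s\<bar>) * norm z powr (- Re s)"
proof -
  have a: "\<bar>Arg z\<bar> < pi/2" using assms Arg_Re_pos by blast
  have "Im s * Arg z \<le> \<bar>Im s\<bar> * \<bar>Arg z\<bar>" by (metis abs_ge_self abs_mult)
  also have "\<dots> \<le> \<bar>Im s\<bar> * (pi/2)" using a by (intro mult_left_mono) auto
  finally have "exp (Im s * Arg z) \<le> exp (pi/2 * \<bar>Im s\<bar>)" by (simp add: mult.commute)
  then have "norm z powr (- Re s) * exp (Im s * Arg z) \<le> norm z powr (- Re s) * exp (pi/2 * \<bar>Im s\<bar>)"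
    by (intro mult_left_mono) auto
  then show ?thesis unfolding norm_powr_complex
    by (simp add: mult.commute)
qed



lemma h0_integrable:
  fixes c \<sigma> :: real
  assumes "\<sigma> > 1"
  shows "(\<lambda>y::real. if \<bar>y\<bar> \<le> 1 then c else \<bar>y\<bar> powr (-\<sigma>)) integrable_on UNIV"
proof -
  define h where "h = (\<lambda>y::real. if \<bar>y\<bar> \<le> 1 then c else \<bar>y\<bar> powr (-\<sigma>))"
  have p: "((\<lambda>x. x powr (-\<sigma>)) has_integral -(1 powr (-\<sigma>+1)) / (-\<sigma>+1)) {1..}"
    by (rule has_integral_powr_to_inf) (use assms in auto)
  have i1: "h integrable_on {1..}"
  proof (rule integrable_spike_finite[of "{1}", OF _ _ has_integral_integrable[OF p]])
    show "\<And>x. x \<in> {1..} - {1} \<Longrightarrow> h x = x powr - \<sigma>" by (auto simp: h_def)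
  qed auto
  have hnn_abs: "h absolutely_integrable_on {1..}"
  proof -
    have "(\<lambda>x. x powr (-\<sigma>)) absolutely_integrable_on {1..}"
      by (rule nonnegative_absolutely_integrable_1) (use has_integral_integrable[OF p] in auto)
    then show ?thesis
      by (rule absolutely_integrable_spike[where S="{1}"]) (auto simp: h_def)
  qed
  have "(\<lambda>x. h (-x)) absolutely_integrable_on {1..} \<and> integral {1..} (\<lambda>x. h (-x)) = integral {1..} h
        \<longleftrightarrow> h absolutely_integrable_on {..-1} \<and> integral {..-1} h = integral {1..} h"
    by (rule has_absolute_integral_reflect_real) (auto simp: image_iff intro!: bexI[of _ "- _"])
  moreover have "(\<lambda>x. h (-x)) = h" by (auto simp: h_def)
  ultimately have "h absolutely_integrable_on {..-1}" using hnn_abs by simp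
  then have i2: "h integrable_on {..-1}" using set_lebesgue_integral_eq_integral(1) by blast
  have i3: "h integrable_on {-1..1}"
  proof -
    have "(\<lambda>x. c) integrable_on {-1..1::real}" by (intro integrable_continuous_real continuous_intros)
    then show ?thesis by (rule integrable_eq) (auto simp: h_def)
  qed
  have "h integrable_on ({..-1} \<union> {-1..1})"
    by (rule integrable_Un[OF _ i2 i3]) (auto intro: negligible_subset[of "{-1}"])
  then have "h integrable_on (({..-1} \<union> {-1..1}) \<union> {1..})"
    by (intro integrable_Un[OF _ _ i1]) (auto intro: negligible_subset[of "{1}"])
  moreover have "({..-1} \<union> {-1..1}) \<union> {1..} = (UNIV::real set)" by auto
  ultimately show ?thesis unfolding h_def by simp
qed



definition FF :: "complex \<Rightarrow> complex \<Rightarrow> complex" where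
  "FF s t = t powr (-s) * cot (of_real pi * t)"

definition UU :: "complex set" where "UU = {t. Re t > 0} - \<int>"

lemma open_UU: "open UU"
  unfolding UU_def by (intro open_Diff closed_Ints open_halfspace_Re_gt)

lemma sin_pi_eq_0: "sin (of_real pi * (z::complex)) = 0 \<longleftrightarrow> z \<in> \<int>"
proof
  assume "sin (of_real pi * z) = 0"
  then obtain n::int where "of_real pi * z = of_real (of_int n * pi)" using sin_eq_0[of "of_real pi * z"] by blast
  then have "z = of_int n" by (simp add: field_simps)
  thus "z \<in> \<int>" by simp
next
  assume "z \<in> \<int>" then obtain n where "z = of_int n" by (auto elim: Ints_cases)
  thus "sin (of_real pi * z) = 0" by (auto simp: sin_eq_0 intro!: exI[of _ n] simp: mult.commute)
qed

lemma holo_FF: "FF s holomorphic_on UU"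
proof -
  have "(\<lambda>t. t powr (-s) * (cos (of_real pi * t) / sin (of_real pi * t))) holomorphic_on UU"
    by (intro holomorphic_intros) (auto simp: UU_def sin_pi_eq_0 complex_nonpos_Reals_iff)
  then show ?thesis by (simp add: FF_def[abs_def] cot_def)
qed

lemma cont_FF: "continuous_on UU (FF s)"
  using holo_FF holomorphic_on_imp_continuous_on by blast

lemma residue_FF:
  assumes "n \<ge> 1"
  shows "residue (FF s) (of_nat n) = of_nat n powr (-s) / pi"
proof -
  define f where "f = (\<lambda>w::complex. w powr (-s) * cos (of_real pi * w))"
  define g where "g = (\<lambda>w::complex. sin (of_real pi * w))"
  have eq: "FF s = (\<lambda>w. f w / g w)" by (auto simp: FF_def f_def g_def cot_def fun_eq_iff)
  have B: "Re w > 0" if "w \<in> ball (of_nat n) (1/2)" for w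
  proof -
    have "\<bar>Re (w - of_nat n)\<bar> \<le> norm (w - of_nat n)" by (rule abs_Re_le_cmod)
    then have "\<bar>Re w - real n\<bar> \<le> norm (w - of_nat n)" by simp
    also have "\<dots> < 1/2" using that by (simp add: dist_norm norm_minus_commute)
    finally show ?thesis using assms by linarith
  qed
  have B': "(w::complex) \<notin> \<real>\<^sub>\<le>\<^sub>0" if "w \<in> ball (of_nat n) (1/2)" for w
  proof -
    have "Re w > 0" using that by (rule B)
    thus ?thesis by (auto simp: complex_nonpos_Reals_iff)
  qed
  have fh: "f holomorphic_on ball (of_nat n) (1/2)"
    unfolding f_def by (intro holomorphic_intros) (use B' in blast)
  have gh: "g holomorphic_on ball (of_nat n) (1/2)"
    unfolding g_def by (intro holomorphic_intros)
  have gd: "(g has_field_derivative (of_real pi * cos (of_real pi * of_nat n))) (at (of_nat n))"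
    unfolding g_def by (auto intro!: derivative_eq_intros)
  have cosn: "cos (of_real pi * of_nat n :: complex) = (-1)^n"
  proof -
    have "cos (of_real pi * of_nat n :: complex) = of_real (cos (real n * pi))"
      by (simp flip: cos_of_real add: mult.commute)
    then show ?thesis by simp
  qed
  have cnz: "cos (of_real pi * of_nat n :: complex) \<noteq> 0" by (simp add: cosn)
  have fnz: "f (of_nat n) \<noteq> 0" using assms cnz by (simp add: f_def)
  have gz: "g (of_nat n) = 0" unfolding g_def by (simp add: sin_pi_eq_0)
  have "residue (\<lambda>w. f w / g w) (of_nat n) = f (of_nat n) / (of_real pi * cos (of_real pi * of_nat n))"
    by (rule residue_simple_pole_deriv[OF fh gh open_ball connected_ball _ gd fnz gz])
       (use assms cnz in auto)
  also have "\<dots> = of_nat n powr (-s) / pi"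
    using cnz by (simp add: f_def)
  finally show ?thesis by (simp add: eq)
qed

lemma rect_FF:
  assumes c: "0 < c" "c < 1" and N: "N \<ge> 1" and T: "T > 0"
  shows "contour_integral (rectpath (Complex c (-T)) (Complex (c + real N) T)) (FF s)
         = 2 * \<i> * (\<Sum>n=1..N. of_nat n powr (-s))"
proof -
  define S where "S = {z. 0 < Re z} \<inter> {z. Re z < real N + 1}"
  define pts where "pts = (of_nat ` {1..N} :: complex set)"
  define a1 where "a1 = Complex c (-T)"
  define a3 where "a3 = Complex (c + real N) T"
  have le: "Re a1 \<le> Re a3" "Im a1 \<le> Im a3" using T by (auto simp: a1_def a3_def)
  have cboxS: "cbox a1 a3 \<subseteq> S" using c by (auto simp: S_def a1_def a3_def in_cbox_complex_iff)
  have ptsbox: "pts \<subseteq> box a1 a3"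
  proof
    fix p assume "p \<in> pts"
    then obtain n where n: "n \<in> {1..N}" "p = of_nat n" by (auto simp: pts_def)
    then show "p \<in> box a1 a3" using c T
      by (auto simp: a1_def a3_def in_box_complex_iff)
  qed
  have SU: "S - pts \<subseteq> UU"
  proof
    fix z assume z: "z \<in> S - pts"
    show "z \<in> UU"
    proof (rule ccontr)
      assume "z \<notin> UU"
      with z have "z \<in> \<int>" by (auto simp: UU_def S_def)
      then obtain m where m: "z = of_int m" by (auto elim: Ints_cases)
      with z have "0 < m" "m < int N + 1" by (auto simp: S_def)
      then have "z = of_nat (nat m)" "nat m \<in> {1..N}" using m by auto
      with z show False by (auto simp: pts_def)
    qed
  qed
  have holo: "FF s holomorphic_on S - pts" using holo_FF SU holomorphic_on_subset by blast
  have openS: "open S" unfolding S_def by (intro open_Int open_halfspace_Re_gt open_halfspace_Re_lt)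
  have connS: "connected S" unfolding S_def
    by (intro convex_connected convex_Int convex_halfspace_Re_gt convex_halfspace_Re_lt)
  have fin: "finite pts" by (simp add: pts_def)
  have pim: "path_image (rectpath a1 a3) = cbox a1 a3 - box a1 a3"
    using le by (rule path_image_rectpath_cbox_minus_box)
  have img: "path_image (rectpath a1 a3) \<subseteq> S - pts"
    using pim cboxS ptsbox by auto
  have wout: "\<forall>z. z \<notin> S \<longrightarrow> winding_number (rectpath a1 a3) z = 0"
    using cboxS le by (auto intro!: winding_number_rectpath_outside)
  have "contour_integral (rectpath a1 a3) (FF s) =
          2 * pi * \<i> * (\<Sum>p\<in>pts. winding_number (rectpath a1 a3) p * residue (FF s) p)"
    by (rule Residue_theorem[OF openS connS fin holo valid_path_rectpath _ img wout]) simp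
  also have "(\<Sum>p\<in>pts. winding_number (rectpath a1 a3) p * residue (FF s) p)
           = (\<Sum>p\<in>pts. residue (FF s) p)"
    using ptsbox by (intro sum.cong refl) (auto simp: winding_number_rectpath)
  also have "\<dots> = (\<Sum>n\<in>{1..N}. residue (FF s) (of_nat n))"
    unfolding pts_def by (subst sum.reindex) (auto simp: inj_on_def)
  also have "\<dots> = (\<Sum>n\<in>{1..N}. of_nat n powr (-s) / pi)"
    by (intro sum.cong refl residue_FF) auto
  also have "\<dots> = (\<Sum>n\<in>{1..N}. of_nat n powr (-s)) / pi"
    by (simp add: sum_divide_distrib)
  finally show ?thesis by (simp add: a1_def a3_def)
qed



lemma cos_2pi_shift: "cos (x + 2*pi*real (N::nat)) = cos x"
proof (induction N)
  case (Suc N)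
  have "cos (x + 2*pi*real (Suc N)) = cos ((x + 2*pi*real N) + 2*pi)"
    by (rule arg_cong[where f=cos]) (simp add: algebra_simps)
  also have "\<dots> = cos (x + 2*pi*real N)" by (rule cos_periodic)
  finally show ?case using Suc by simp
qed simp

lemma cos_2pic_lt1:
  assumes "0 < c" "c < 1"
  shows "cos (2*pi*c) < 1"
proof -
  have "cos (2*pi*c) \<noteq> 1"
  proof
    assume "cos (2*pi*c) = 1"
    then obtain n::int where n: "2*pi*c = real_of_int n * 2 * pi" using cos_one_2pi_int[of "2*pi*c"] by blast
    then have "c = n" by (simp add: field_simps)
    with assms have "0 < n" "n < 1" by auto
    then show False by linarith
  qed
  then show ?thesis using cos_le_one[of "2*pi*c"] by linarith
qed

lemma Complex_in_UU:
  assumes "0 < c" "c < 1"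
  shows "Complex (c + real N) y \<in> UU"
proof -
  have "Complex (c + real N) y \<notin> \<int>"
  proof
    assume "Complex (c + real N) y \<in> \<int>"
    then obtain m::int where "Complex (c + real N) y = of_int m" by (auto elim: Ints_cases)
    then have "c + real N = m" by (simp add: complex_eq_iff)
    then have "c = m - int N" by simp
    with assms have "0 < m - int N" "m - int N < 1" by auto
    then show False by linarith
  qed
  then show ?thesis using assms by (simp add: UU_def)
qed

lemma cont_vert:
  assumes "0 < c" "c < 1"
  shows "continuous_on UNIV (\<lambda>y. FF s (Complex (c + real N) y))"
proof -
  have "continuous_on UNIV (\<lambda>y::real. Complex (c + real N) y)"
    unfolding Complex_eq by (intro continuous_intros)
  moreover have "range (\<lambda>y::real. Complex (c + real N) y) \<subseteq> UU"
    using Complex_in_UU[OF assms] by auto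
  ultimately show ?thesis
    using continuous_on_compose2[OF cont_FF] by blast
qed

definition Hb :: "complex \<Rightarrow> real \<Rightarrow> real \<Rightarrow> real" where
  "Hb s c y = exp (pi/2 * \<bar>Im s\<bar>) * (2 / (1 - cos (2*pi*c))) *
      (if \<bar>y\<bar> \<le> 1 then c powr (- Re s) else \<bar>y\<bar> powr (- Re s))"

lemma Hb_integrable:
  assumes "Re s > 1"
  shows "Hb s c integrable_on UNIV"
proof -
  have h0: "(\<lambda>y. if \<bar>y\<bar> \<le> 1 then c powr (- Re s) else \<bar>y\<bar> powr (- Re s)) integrable_on UNIV"
    by (rule h0_integrable) (use assms in simp)
  then have "(\<lambda>y. (exp (pi/2 * \<bar>Im s\<bar>) * (2 / (1 - cos (2*pi*c)))) *
      (if \<bar>y\<bar> \<le> 1 then c powr (- Re s) else \<bar>y\<bar> powr (- Re s))) integrable_on UNIV"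
    using integrable_cmul[OF h0, of "exp (pi/2 * \<bar>Im s\<bar>) * (2 / (1 - cos (2*pi*c)))"]
    by (simp only: real_scaleR_def)
  then show ?thesis unfolding Hb_def .
qed

lemma vert_bound:
  assumes s: "Re s > 1" and c: "0 < c" "c < 1"
  shows "norm (FF s (Complex (c + real N) y)) \<le> Hb s c y"
    and "norm (FF s (Complex (c + real N) y)) \<le>
           exp (pi/2 * \<bar>Im s\<bar>) * (2 / (1 - cos (2*pi*c))) * (c + real N) powr (- Re s)"
proof -
  define z where "z = Complex (c + real N) y"
  define e where "e = exp (pi/2 * \<bar>Im s\<bar>)"
  define B where "B = 2 / (1 - cos (2*pi*c))"
  have k1: "cos (2*pi*c) < 1" using cos_2pic_lt1[OF c] .
  have Bpos: "B > 0" using k1 by (simp add: B_def)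
  have Rez: "Re z = c + real N" by (simp add: z_def)
  have Rez0: "Re z > 0" using c by (simp add: Rez)
  have p: "norm (z powr (-s)) \<le> e * norm z powr (- Re s)"
    unfolding e_def by (rule norm_powr_bound[OF Rez0])
  have "cos (2 * Re (of_real pi * z)) = cos (2*pi*c + 2*pi*real N)"
    by (simp add: Rez algebra_simps)
  also have "\<dots> = cos (2*pi*c)" by (rule cos_2pi_shift)
  finally have "norm (cot (of_real pi * z)) \<le> B"
    unfolding B_def using k1 by (intro norm_cot_bound_vert) auto
  moreover have e0: "e \<ge> 0" by (simp add: e_def)
  ultimately have F: "norm (FF s z) \<le> e * norm z powr (- Re s) * B"
    unfolding FF_def norm_mult using p by (intro mult_mono) auto
  have nz1: "norm z \<ge> c + real N" using complex_Re_le_cmod[of z] Rez by simp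
  have nz2: "norm z \<ge> \<bar>y\<bar>" using abs_Im_le_cmod[of z] by (simp add: z_def)
  have m1: "norm z powr (- Re s) \<le> (c + real N) powr (- Re s)"
    by (rule powr_mono2') (use s c nz1 in auto)
  have m2: "norm z powr (- Re s) \<le> (if \<bar>y\<bar> \<le> 1 then c powr (- Re s) else \<bar>y\<bar> powr (- Re s))"
  proof (cases "\<bar>y\<bar> \<le> 1")
    case True
    have "norm z powr (- Re s) \<le> c powr (- Re s)"
      by (rule powr_mono2') (use s c nz1 in auto)
    then show ?thesis using True by simp
  next
    case False
    have "norm z powr (- Re s) \<le> \<bar>y\<bar> powr (- Re s)"
      by (rule powr_mono2') (use s False nz2 in auto)
    then show ?thesis using False by simp
  qed
  show "norm (FF s (Complex (c + real N) y)) \<le> Hb s c y"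
  proof -
    have "e * norm z powr (- Re s) * B \<le> e * (if \<bar>y\<bar> \<le> 1 then c powr (- Re s) else \<bar>y\<bar> powr (- Re s)) * B"
      using m2 e0 Bpos by (intro mult_right_mono mult_left_mono) auto
    then show ?thesis using F unfolding Hb_def z_def e_def B_def by (simp add: mult_ac)
  qed
  show "norm (FF s (Complex (c + real N) y)) \<le> e * B * (c + real N) powr (- Re s)"
  proof -
    have "e * norm z powr (- Re s) * B \<le> e * (c + real N) powr (- Re s) * B"
      using m1 e0 Bpos by (intro mult_right_mono mult_left_mono) auto
    then show ?thesis using F unfolding z_def by (simp add: mult_ac)
  qed
qed

lemma trunc_lim:
  fixes G :: "real \<Rightarrow> complex" and H :: "real \<Rightarrow> real"
  assumes cont: "continuous_on UNIV G" and H: "H integrable_on UNIV" and le: "\<And>y. norm (G y) \<le> H y"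
  shows "G integrable_on UNIV" "(\<lambda>m. integral {-real m..real m} G) \<longlonglongrightarrow> integral UNIV G"
proof -
  define f where "f m y = (if y \<in> {-real m..real m} then G y else 0)" for m y
  have fi: "f m integrable_on UNIV" for m
    unfolding f_def integrable_restrict_UNIV
    by (rule integrable_continuous_real) (rule continuous_on_subset[OF cont], auto)
  have fle: "norm (f m y) \<le> H y" for m y
    using le[of y] order_trans[OF norm_ge_zero le[of y]] by (auto simp: f_def)
  have conv: "(\<lambda>m. f m y) \<longlonglongrightarrow> G y" for y
  proof (rule tendsto_eventually)
    obtain M::nat where M: "\<bar>y\<bar> \<le> real M" using real_arch_simple by blast
    show "\<forall>\<^sub>F m in sequentially. f m y = G y"
      unfolding eventually_sequentially
      by (rule exI[of _ M]) (use M in \<open>auto simp: f_def\<close>)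
  qed
  note dc = dominated_convergence[OF fi H fle conv]
  show "G integrable_on UNIV" by (rule dc(1))
  show "(\<lambda>m. integral {-real m..real m} G) \<longlonglongrightarrow> integral UNIV G"
  proof -
    have "integral UNIV (f m) = integral {-real m..real m} G" for m
      unfolding f_def by (rule integral_restrict_UNIV)
    then show ?thesis using dc(2) by simp
  qed
qed



lemma horiz_bound:
  assumes s: "Re s > 1" and c: "0 < c" and T: "T \<ge> 1"
    and ab: "Im a = Y" "Im b = Y" "c \<le> Re a" "c \<le> Re b" and Y: "\<bar>Y\<bar> = T"
  shows "FF s contour_integrable_on linepath a b"
    "norm (contour_integral (linepath a b) (FF s)) \<le> exp (pi/2 * \<bar>Im s\<bar>) * T powr (- Re s) * 3 * norm (b - a)"
proof -
  define e where "e = exp (pi/2 * \<bar>Im s\<bar>)"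
  have seg: "Im z = Y \<and> Re z \<ge> c" if "z \<in> closed_segment a b" for z
  proof -
    from that have "Im z = Y" "Re z \<in> closed_segment (Re a) (Re b)"
      using ab by (auto simp: closed_segment_same_Im)
    then show ?thesis using ab by (auto simp: closed_segment_eq_real_ivl split: if_splits)
  qed
  have inU: "z \<in> UU" if "z \<in> closed_segment a b" for z
  proof -
    have z: "Im z = Y" "Re z \<ge> c" using seg[OF that] by auto
    have "z \<notin> \<int>"
    proof
      assume "z \<in> \<int>" then obtain m::int where "z = of_int m" by (auto elim: Ints_cases)
      then have "Im z = 0" by simp
      with z Y T show False by auto
    qed
    then show ?thesis using z c by (simp add: UU_def)
  qed
  show ci: "FF s contour_integrable_on linepath a b"
    by (rule contour_integrable_holomorphic_simple[OF holo_FF open_UU valid_path_linepath])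
       (use inU in auto)
  have bnd: "norm (FF s z) \<le> e * T powr (- Re s) * 3" if "z \<in> closed_segment a b" for z
  proof -
    have z: "Im z = Y" "Re z \<ge> c" using seg[OF that] by auto
    have Rez0: "Re z > 0" using z c by linarith
    have p: "norm (z powr (-s)) \<le> e * norm z powr (- Re s)"
      unfolding e_def by (rule norm_powr_bound[OF Rez0])
    have nz: "norm z \<ge> T" using abs_Im_le_cmod[of z] z Y by simp
    have "norm z powr (- Re s) \<le> T powr (- Re s)"
      by (rule powr_mono2') (use s T nz in auto)
    then have p2: "norm (z powr (-s)) \<le> e * T powr (- Re s)"
    proof -
      have "e * norm z powr (- Re s) \<le> e * T powr (- Re s)"
        by (rule mult_left_mono) (use \<open>norm z powr (- Re s) \<le> T powr (- Re s)\<close> in \<open>auto simp: e_def\<close>)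
      then show ?thesis using p by linarith
    qed
    have "\<bar>Im (of_real pi * z)\<bar> = pi * T" using z Y by (simp add: abs_mult)
    moreover have "1 * 1 \<le> pi * T" by (rule mult_mono) (use T pi_gt3 in auto)
    ultimately have "norm (cot (of_real pi * z)) \<le> 3"
      by (intro norm_cot_bound_horiz) auto
    then show ?thesis unfolding FF_def norm_mult
      using p2 by (intro mult_mono) (auto simp: e_def)
  qed
  show "norm (contour_integral (linepath a b) (FF s)) \<le> exp (pi/2 * \<bar>Im s\<bar>) * T powr (- Re s) * 3 * norm (b - a)"
    using contour_integral_bound_linepath[OF ci _ bnd] by (simp add: e_def)
qed



lemma vert_seg_UU:
  assumes "0 < c" "c < 1" "Re a = c + real N" "Re b = c + real N"
  shows "closed_segment a b \<subseteq> UU"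
proof
  fix z assume "z \<in> closed_segment a b"
  then have "Re z = c + real N" using assms by (auto simp: closed_segment_same_Re)
  then have "z = Complex (c + real N) (Im z)" by (simp add: complex_eq_iff)
  then show "z \<in> UU" using Complex_in_UU[OF assms(1,2)] by metis
qed

lemma rect_decomp:
  assumes s: "Re s > 1" and c: "0 < c" "c < 1" and N: "N \<ge> 1" and T: "T \<ge> 1"
  defines "a1 \<equiv> Complex c (-T)" and "a2 \<equiv> Complex (c + real N) (-T)"
      and "a3 \<equiv> Complex (c + real N) T" and "a4 \<equiv> Complex c T"
  shows "contour_integral (rectpath a1 a3) (FF s) =
           contour_integral (linepath a1 a2) (FF s)
         + \<i> * integral {-T..T} (\<lambda>y. FF s (Complex (c + real N) y))
         + contour_integral (linepath a3 a4) (FF s)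
         - \<i> * integral {-T..T} (\<lambda>y. FF s (Complex (c + real 0) y))"
proof -
  have i1: "FF s contour_integrable_on linepath a1 a2"
    by (rule horiz_bound(1)[OF s c(1) T, of _ "-T"]) (use c T in \<open>auto simp: a1_def a2_def\<close>)
  have i3: "FF s contour_integrable_on linepath a3 a4"
    by (rule horiz_bound(1)[OF s c(1) T, of _ "T"]) (use c T in \<open>auto simp: a3_def a4_def\<close>)
  have seg2: "closed_segment a2 a3 \<subseteq> UU"
    by (rule vert_seg_UU[OF c]) (auto simp: a2_def a3_def)
  have seg4: "closed_segment a4 a1 \<subseteq> UU"
    by (rule vert_seg_UU[OF c, where N=0]) (auto simp: a4_def a1_def)
  have i2: "FF s contour_integrable_on linepath a2 a3"
    by (rule contour_integrable_holomorphic_simple[OF holo_FF open_UU valid_path_linepath])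
       (use seg2 in auto)
  have i4: "FF s contour_integrable_on linepath a4 a1"
    by (rule contour_integrable_holomorphic_simple[OF holo_FF open_UU valid_path_linepath])
       (use seg4 in auto)
  have r: "rectpath a1 a3 = linepath a1 a2 +++ linepath a2 a3 +++ linepath a3 a4 +++ linepath a4 a1"
    by (simp add: rectpath_def Let_def a1_def a2_def a3_def a4_def)
  have "contour_integral (rectpath a1 a3) (FF s) =
          contour_integral (linepath a1 a2) (FF s) + contour_integral (linepath a2 a3) (FF s)
        + contour_integral (linepath a3 a4) (FF s) + contour_integral (linepath a4 a1) (FF s)"
    unfolding r using i1 i2 i3 i4 by (simp add: add_ac)
  also have "contour_integral (linepath a2 a3) (FF s) =
      \<i> * integral {-T..T} (\<lambda>y. FF s (Complex (c + real N) y))"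
    by (rule contour_integral_linepath_same_Re) (use T in \<open>auto simp: a2_def a3_def\<close>)
  also have "contour_integral (linepath a4 a1) (FF s) = - contour_integral (linepath a1 a4) (FF s)"
    by (rule contour_integral_reverse_linepath)
       (rule continuous_on_subset[OF cont_FF seg4])
  also have "contour_integral (linepath a1 a4) (FF s) =
      \<i> * integral {-T..T} (\<lambda>y. FF s (Complex (c + real 0) y))"
    by (rule contour_integral_linepath_same_Re) (use T in \<open>auto simp: a1_def a4_def\<close>)
  finally show ?thesis by simp
qed



lemma strip_eq:
  assumes s: "Re s > 1" and c: "0 < c" "c < 1" and N: "N \<ge> 1"
  shows "integral UNIV (\<lambda>y. FF s (Complex (c + real 0) y)) =
         integral UNIV (\<lambda>y. FF s (Complex (c + real N) y)) - 2 * (\<Sum>n=1..N. of_nat n powr (-s))"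
proof -
  define J where "J K = integral UNIV (\<lambda>y. FF s (Complex (c + real K) y))" for K
  define V where "V K m = integral {-real m..real m} (\<lambda>y. FF s (Complex (c + real K) y))" for K m
  define S where "S = (\<Sum>n=1..N. of_nat n powr (-s) :: complex)"
  define e where "e = exp (pi/2 * \<bar>Im s\<bar>)"
  define hb where "hb m = contour_integral (linepath (Complex c (-real m)) (Complex (c + real N) (-real m))) (FF s)" for m :: nat
  define ht where "ht m = contour_integral (linepath (Complex (c + real N) (real m)) (Complex c (real m))) (FF s)" for m :: nat
  have VJ: "(\<lambda>m. V K m) \<longlonglongrightarrow> J K" for K
    unfolding V_def J_def
    by (rule trunc_lim(2)[OF cont_vert[OF c] Hb_integrable[OF s] vert_bound(1)[OF s c]])
  have g0: "(\<lambda>m::nat. e * real m powr (- Re s) * 3 * real N) \<longlonglongrightarrow> 0"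
  proof -
    have "(\<lambda>m::nat. real m powr (- Re s)) \<longlonglongrightarrow> 0"
      by (rule tendsto_neg_powr) (use s filterlim_real_sequentially in auto)
    then show ?thesis
      by (intro tendsto_mult_right_zero tendsto_mult_left_zero)
  qed
  have nN: "norm (Complex (c + real N) Y - Complex c Y) = real N" for Y
    by (simp add: cmod_def)
  have nN': "norm (Complex c Y - Complex (c + real N) Y) = real N" for Y
    by (simp add: cmod_def)
  have hb0: "hb \<longlonglongrightarrow> 0"
  proof (rule Lim_null_comparison[OF _ g0])
    show "\<forall>\<^sub>F m in sequentially. norm (hb m) \<le> e * real m powr (- Re s) * 3 * real N"
      unfolding eventually_sequentially
    proof (intro exI[of _ 1] allI impI)
      fix m :: nat assume "1 \<le> m"
      then show "norm (hb m) \<le> e * real m powr (- Re s) * 3 * real N"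
        using horiz_bound(2)[where T="real m" and a="Complex c (-real m)" and b="Complex (c + real N) (-real m)" and Y="- real m", OF s c(1)] c nN[of "- real m"]
        unfolding hb_def e_def by auto
    qed
  qed
  have ht0: "ht \<longlonglongrightarrow> 0"
  proof (rule Lim_null_comparison[OF _ g0])
    show "\<forall>\<^sub>F m in sequentially. norm (ht m) \<le> e * real m powr (- Re s) * 3 * real N"
      unfolding eventually_sequentially
    proof (intro exI[of _ 1] allI impI)
      fix m :: nat assume "1 \<le> m"
      then show "norm (ht m) \<le> e * real m powr (- Re s) * 3 * real N"
        using horiz_bound(2)[where T="real m" and a="Complex (c + real N) (real m)" and b="Complex c (real m)" and Y="real m", OF s c(1)] c nN'[of "real m"]
        unfolding ht_def e_def by auto
    qed
  qed
  have eq: "hb m + \<i> * V N m + ht m - \<i> * V 0 m = 2 * \<i> * S" if "m \<ge> 1" for m :: nat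
  proof -
    have "hb m + \<i> * V N m + ht m - \<i> * V 0 m =
          contour_integral (rectpath (Complex c (-real m)) (Complex (c + real N) (real m))) (FF s)"
      unfolding hb_def ht_def V_def
      by (rule rect_decomp[OF s c N, symmetric]) (use that in simp)
    also have "\<dots> = 2 * \<i> * S"
      unfolding S_def by (rule rect_FF[OF c N]) (use that in simp)
    finally show ?thesis .
  qed
  have L1: "(\<lambda>m. hb m + \<i> * V N m + ht m - \<i> * V 0 m) \<longlonglongrightarrow> 0 + \<i> * J N + 0 - \<i> * J 0"
    by (intro tendsto_intros hb0 ht0 VJ)
  have L2: "(\<lambda>m. hb m + \<i> * V N m + ht m - \<i> * V 0 m) \<longlonglongrightarrow> 2 * \<i> * S"
  proof (rule tendsto_eventually)
    show "\<forall>\<^sub>F m in sequentially. hb m + \<i> * V N m + ht m - \<i> * V 0 m = 2 * \<i> * S"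
      unfolding eventually_sequentially using eq by blast
  qed
  have "0 + \<i> * J N + 0 - \<i> * J 0 = 2 * \<i> * S" using LIMSEQ_unique[OF L1 L2] .
  then have "\<i> * (J 0 - (J N - 2 * S)) = 0" by (simp add: algebra_simps)
  then have "J 0 = J N - 2 * S" by simp
  then show ?thesis unfolding J_def S_def .
qed

lemma right_lim:
  assumes s: "Re s > 1" and c: "0 < c" "c < 1"
  shows "(\<lambda>N. integral UNIV (\<lambda>y. FF s (Complex (c + real N) y))) \<longlonglongrightarrow> 0"
proof -
  define f where "f N y = FF s (Complex (c + real N) y)" for N y
  have fi: "f N integrable_on UNIV" for N
    unfolding f_def by (rule trunc_lim(1)[OF cont_vert[OF c] Hb_integrable[OF s] vert_bound(1)[OF s c]])
  have le: "norm (f N y) \<le> Hb s c y" for N y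
    unfolding f_def by (rule vert_bound(1)[OF s c])
  have pw: "(\<lambda>N. f N y) \<longlonglongrightarrow> 0" for y
  proof (rule Lim_null_comparison)
    show "\<forall>\<^sub>F N in sequentially. norm (f N y) \<le>
            exp (pi/2 * \<bar>Im s\<bar>) * (2 / (1 - cos (2*pi*c))) * (c + real N) powr (- Re s)"
      unfolding f_def using vert_bound(2)[OF s c] by simp
    have "(\<lambda>N::nat. (c + real N) powr (- Re s)) \<longlonglongrightarrow> 0"
    proof (rule tendsto_neg_powr)
      show "filterlim (\<lambda>N::nat. c + real N) at_top sequentially"
        by (rule filterlim_tendsto_add_at_top[OF tendsto_const filterlim_real_sequentially])
    qed (use s in auto)
    then show "(\<lambda>N::nat. exp (pi/2 * \<bar>Im s\<bar>) * (2 / (1 - cos (2*pi*c))) * (c + real N) powr (- Re s)) \<longlonglongrightarrow> 0"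
      by (rule tendsto_mult_right_zero)
  qed
  have "(\<lambda>N. integral UNIV (f N)) \<longlonglongrightarrow> integral UNIV (\<lambda>y. 0::complex)"
    using dominated_convergence(2)[OF fi Hb_integrable[OF s] le pw] by simp
  then show ?thesis unfolding f_def by simp
qed

lemma zeta_lim:
  assumes s: "Re s > 1"
  shows "(\<lambda>N. \<Sum>n=1..N. of_nat n powr (-s)) \<longlonglongrightarrow> riemann_zeta s"
proof -
  define g where "g k = 1 / (of_nat (Suc k)) powr s" for k :: nat
  have "summable (\<lambda>n. exp (of_real (ln (of_nat n)) * (-s)))"
    by (rule summable_complex_powr_iff) (use s in simp)
  then have "summable (\<lambda>n. exp (of_real (ln (of_nat (n + 1))) * (-s)))"
    by (rule summable_ignore_initial_segment)
  moreover have "exp (of_real (ln (of_nat (n + 1))) * (-s)) = g n" for n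
    by (simp add: g_def powr_def exp_minus field_simps del: of_nat_Suc)
  ultimately have sg: "summable g" by simp
  have "(\<lambda>N. \<Sum>k<N. g k) \<longlonglongrightarrow> suminf g" by (rule summable_LIMSEQ[OF sg])
  moreover have "(\<Sum>k<N. g k) = (\<Sum>n=1..N. of_nat n powr (-s))" for N
    by (simp add: sum.atLeast1_atMost_eq g_def powr_minus divide_inverse)
  moreover have "g = (\<lambda>k. 1 / (of_nat (Suc k)) powr s)" by (simp add: fun_eq_iff g_def)
  then have "suminf g = riemann_zeta s" unfolding riemann_zeta_def by simp
  ultimately show ?thesis by simp
qed

theorem mainTheorem1:
  fixes s :: complex and c :: real
  assumes "Re s > 1" and "0 < c" and "c < 1"
  shows "(\<lambda>y::real. (Complex c y) powr (-s) * cot (of_real pi * Complex c y)) integrable_on UNIV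
    \<and> riemann_zeta s = (\<i> / 2) * vertical_line_integral c (\<lambda>t. t powr (-s) * cot (of_real pi * t))
    \<and> riemann_zeta s = - (1 / 2) * integral UNIV (\<lambda>y::real. (Complex c y) powr (-s) * cot (of_real pi * Complex c y))"
proof -
  have s: "Re s > 1" and c: "0 < c" "c < 1" using assms by auto
  define J0 where "J0 = integral UNIV (\<lambda>y. FF s (Complex c y))"
  have int0: "(\<lambda>y. FF s (Complex (c + real 0) y)) integrable_on UNIV"
    by (rule trunc_lim(1)[OF cont_vert[OF c] Hb_integrable[OF s] vert_bound(1)[OF s c]])
  have fun_eq: "(\<lambda>y::real. (Complex c y) powr (-s) * cot (of_real pi * Complex c y)) = (\<lambda>y. FF s (Complex c y))"
    by (simp add: FF_def)
  have seq: "J0 = integral UNIV (\<lambda>y. FF s (Complex (c + real (Suc N)) y)) - 2 * (\<Sum>n=1..Suc N. of_nat n powr (-s))" for N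
    using strip_eq[OF s c, of "Suc N"] by (simp add: J0_def)
  have L1: "(\<lambda>N. integral UNIV (\<lambda>y. FF s (Complex (c + real (Suc N)) y)) - 2 * (\<Sum>n=1..Suc N. of_nat n powr (-s)))
            \<longlonglongrightarrow> 0 - 2 * riemann_zeta s"
    by (intro tendsto_intros LIMSEQ_Suc[OF right_lim[OF s c]] LIMSEQ_Suc[OF zeta_lim[OF s]])
  have L2: "(\<lambda>N. integral UNIV (\<lambda>y. FF s (Complex (c + real (Suc N)) y)) - 2 * (\<Sum>n=1..Suc N. of_nat n powr (-s)))
            \<longlonglongrightarrow> J0"
    using seq by simp
  have J: "J0 = - 2 * riemann_zeta s" using LIMSEQ_unique[OF L2 L1] by simp
  have V: "vertical_line_integral c (\<lambda>t. t powr (-s) * cot (of_real pi * t)) = \<i> * J0"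
    by (simp add: vertical_line_integral_def J0_def FF_def)
  show ?thesis
    unfolding fun_eq V using int0 J by (simp add: J0_def)
qed

end
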